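(* Let $n\ge p$ and $\mathcal X\in\mathrm{St}(n,p,l)$. The orthogonal projection (with respect to the inner product $\langle\mathcal A,\mathcal B\rangle=\sum_{i,j,k}a_{ijk}b_{ijk}$) from $\mathbb R^{n\times p\times l}$ onto the tangent space $T_{\mathcal X}\mathrm{St}(n,p,l)$ is given, for $\mathcal U\in\mathbb R^{n\times p\times l}$, by $$\mathbf P_{\mathcal X}(\mathcal U)=\mathcal U-\tfrac12\mathcal X*(\mathcal X^\top*\mathcal U+\mathcal U^\top*\mathcal X)=\mathcal U-\mathcal X*\operatorname{sym}(\mathcal X^\top*\mathcal U)=(\mathcal I-\mathcal X*\mathcal X^\top)*\mathcal U+\mathcal X*\operatorname{skew}(\mathcal X^\top*\mathcal U).$$
   Context: Frontal slices $A^{(i)}=\mathcal A(:,:,i)$. $\operatorname{bcirc}(\mathcal A)$ is the block circulant matrix with $(i,j)$ block $A^{(((i-j)\bmod l)+1)}$; $\operatorname{unfold}$ stacks the frontal slices vertically, $\operatorname{fold}$ is its inverse; the t-product is $\mathcal A*\mathcal B=\operatorname{fold}(\operatorname{bcirc}(\mathcal A)\operatorname{unfold}(\mathcal B))$. The transpose $\mathcal A^\top$ of $\mathcal A\in\mathbb R^{n\times p\times l}$ is the $p\times n\times l$ tensor with frontal slices $(A^{(1)})^\top,(A^{(l)})^\top,\dots,(A^{(2)})^\top$. $\mathcal I$ is the identity tensor (first frontal slice the identity matrix, others zero). $\mathrm{St}(n,p,l)=\{\mathcal X\in\mathbb R^{n\times p\times l}:\mathcal X^\top*\mathcal X=\mathcal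 I\}$, an embedded submanifold of $\mathbb R^{n\times p\times l}$, and $T_{\mathcal X}\mathrm{St}(n,p,l)$ its tangent space at $\mathcal X$ (a linear subspace of $\mathbb R^{n\times p\times l}$). $\operatorname{sym}(\mathcal A)=(\mathcal A+\mathcal A^\top)/2$, $\operatorname{skew}(\mathcal A)=(\mathcal A-\mathcal A^\top)/2$. *)

theory Defs
  imports "HOL-Analysis.Analysis"
begin

text \<open>Third-order real tensors of size n x p x l are represented as functions
  A :: nat => nat => nat => real with 0-based indices, A i j k = a_{(i+1)(j+1)(k+1)},
  vanishing outside the index box. Frontal slice k (0-based) is (\<lambda>i j. A i j k).\<close>

type_synonym tensor = "nat \<Rightarrow> nat \<Rightarrow> nat \<Rightarrow> real"

definition tensors :: "nat \<Rightarrow> nat \<Rightarrow> nat \<Rightarrow> tensor set" where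
  "tensors n p l = {A. \<forall>i j k. (n \<le> i \<or> p \<le> j \<or> l \<le> k) \<longrightarrow> A i j k = 0}"

definition tadd :: "tensor \<Rightarrow> tensor \<Rightarrow> tensor" where
  "tadd A B = (\<lambda>i j k. A i j k + B i j k)"

definition tsub :: "tensor \<Rightarrow> tensor \<Rightarrow> tensor" where
  "tsub A B = (\<lambda>i j k. A i j k - B i j k)"

definition tscale :: "real \<Rightarrow> tensor \<Rightarrow> tensor" where
  "tscale c A = (\<lambda>i j k. c * A i j k)"

text \<open>t-product A * B = fold (bcirc A * unfold B) for A of size n x q x l, B of size q x m x l.
  Block (k,m) (0-based) of bcirc A is the frontal slice (k - m) mod l of A, hence
  slice k of A * B is  sum over m<l of  A^((k-m) mod l) B^(m).\<close>
definition tprod :: "nat \<Rightarrow> nat \<Rightarrow> tensor \<Rightarrow> tensor \<Rightarrow> tensor" where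
  "tprod l q A B = (\<lambda>i j k. if k < l then
      (\<Sum>m<l. \<Sum>r<q. A i r (nat ((int k - int m) mod int l)) * B r j m) else 0)"

text \<open>Transpose: frontal slices (A^(1))^T, (A^(l))^T, ..., (A^(2))^T, i.e. 0-based slice k is
  the transpose of slice (l - k) mod l.\<close>
definition ttrans :: "nat \<Rightarrow> tensor \<Rightarrow> tensor" where
  "ttrans l A = (\<lambda>i j k. if k < l then A j i ((l - k) mod l) else 0)"

definition tid :: "nat \<Rightarrow> nat \<Rightarrow> tensor" where
  "tid p l = (\<lambda>i j k. if i = j \<and> i < p \<and> k = 0 \<and> 0 < l then 1 else 0)"

definition tsym :: "nat \<Rightarrow> tensor \<Rightarrow> tensor" where
  "tsym l A = tscale (1/2) (tadd A (ttrans l A))"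

definition tskew :: "nat \<Rightarrow> tensor \<Rightarrow> tensor" where
  "tskew l A = tscale (1/2) (tsub A (ttrans l A))"

definition tinner :: "nat \<Rightarrow> nat \<Rightarrow> nat \<Rightarrow> tensor \<Rightarrow> tensor \<Rightarrow> real" where
  "tinner n p l A B = (\<Sum>i<n. \<Sum>j<p. \<Sum>k<l. A i j k * B i j k)"

definition stiefel :: "nat \<Rightarrow> nat \<Rightarrow> nat \<Rightarrow> tensor set" where
  "stiefel n p l = {X \<in> tensors n p l. tprod l n (ttrans l X) X = tid p l}"

definition tangent_space :: "nat \<Rightarrow> nat \<Rightarrow> nat \<Rightarrow> tensor \<Rightarrow> tensor set" where
  "tangent_space n p l X = {V. \<exists>\<gamma> :: real \<Rightarrow> tensor. \<exists>\<epsilon>>0.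
      \<gamma> 0 = X \<and> (\<forall>t. \<bar>t\<bar> < \<epsilon> \<longrightarrow> \<gamma> t \<in> stiefel n p l) \<and>
      (\<forall>i j k. ((\<lambda>t. \<gamma> t i j k) has_real_derivative V i j k) (at 0))}"

definition is_orth_proj :: "nat \<Rightarrow> nat \<Rightarrow> nat \<Rightarrow> tensor set \<Rightarrow> (tensor \<Rightarrow> tensor) \<Rightarrow> bool" where
  "is_orth_proj n p l T P \<longleftrightarrow>
     (\<forall>U \<in> tensors n p l. P U \<in> T \<and> (\<forall>V \<in> T. tinner n p l (tsub U (P U)) V = 0))"

end

theory Submission
  imports Defs "Jordan_Normal_Form.Determinant"
begin


definition cm :: "nat \<Rightarrow> nat \<Rightarrow> nat \<Rightarrow> nat" where
  "cm l a b = nat ((int a - int b) mod int l)"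

lemma cm_lt: "0 < l \<Longrightarrow> cm l a b < l"
  unfolding cm_def by (simp add: nat_less_iff)

lemma cm_int: "0 < l \<Longrightarrow> int (cm l a b) = (int a - int b) mod int l"
  unfolding cm_def by simp

lemma cm_cm: "0 < l \<Longrightarrow> cm l (cm l a c) (cm l b c) = cm l a b"
proof -
  assume l: "0 < l"
  have "int (cm l (cm l a c) (cm l b c)) = ((int a - int c) mod int l - (int b - int c) mod int l) mod int l"
    using l by (simp add: cm_int)
  also have "\<dots> = ((int a - int c) - (int b - int c)) mod int l" by (simp add: mod_diff_eq)
  also have "\<dots> = int (cm l a b)" using l by (simp add: cm_int)
  finally show ?thesis by simp
qed

lemma cm_self[simp]: "cm l a a = 0" unfolding cm_def by simp

lemma cm_0: "a < l \<Longrightarrow> cm l a 0 = a" unfolding cm_def by simp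

lemma cm_eq0: "a < l \<Longrightarrow> b < l \<Longrightarrow> cm l a b = 0 \<longleftrightarrow> a = b"
proof -
  assume a: "a < l" and b: "b < l"
  have "cm l a b = 0 \<longleftrightarrow> int (cm l a b) = 0" by simp
  also have "\<dots> \<longleftrightarrow> (int a - int b) mod int l = 0" using a by (simp add: cm_int)
  also have "\<dots> \<longleftrightarrow> int l dvd (int a - int b)" by auto
  also have "\<dots> \<longleftrightarrow> a = b"
  proof
    assume "int l dvd (int a - int b)"
    moreover have "\<bar>int a - int b\<bar> < int l" using a b by auto
    ultimately show "a = b" using dvd_imp_le_int[of "int a - int b" "int l"] by fastforce
  qed simp
  finally show ?thesis .
qed

lemma cm_inv: "b < l \<Longrightarrow> cm l a (cm l a b) = b"
proof -
  assume b: "b < l"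
  hence l: "0 < l" by simp
  have "int (cm l a (cm l a b)) = (int a - (int a - int b) mod int l) mod int l" using l by (simp add: cm_int)
  also have "\<dots> = (int a - (int a - int b)) mod int l" by (simp add: mod_diff_right_eq)
  also have "\<dots> = int b" using b by simp
  finally show ?thesis by simp
qed

lemma trans_idx: "k < l \<Longrightarrow> (l - k) mod l = cm l 0 k"
proof -
  assume k: "k < l"
  have "int ((l - k) mod l) = (int l - int k) mod int l" using k by (simp add: zmod_int of_nat_diff)
  also have "\<dots> = (0 - int k) mod int l" by (simp add: mod_diff_eq[symmetric])
  finally have "int ((l - k) mod l) = int (cm l 0 k)" using k by (simp add: cm_int)
  thus ?thesis by simp
qed

lemma sum_refl: "(\<Sum>m<l. f (cm l a m)) = (\<Sum>m<l. (f m :: real))"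
  by (rule sum.reindex_bij_witness[where i="cm l a" and j="cm l a"]) (auto simp: cm_inv cm_lt)

lemma sum_shift: "(\<Sum>m<l. f (cm l m a)) = (\<Sum>m<l. (f m :: real))"
proof (rule sum.reindex_bij_witness[where i="\<lambda>u. (u + a) mod l" and j="\<lambda>m. cm l m a"])
  fix u assume u: "u \<in> {..<l}"
  hence l: "0 < l" by auto
  have "int (cm l ((u + a) mod l) a) = (int ((u + a) mod l) - int a) mod int l" using l by (simp add: cm_int)
  also have "\<dots> = ((int u + int a) mod int l - int a) mod int l" by (simp add: zmod_int)
  also have "\<dots> = (int u + int a - int a) mod int l" by (simp add: mod_diff_left_eq)
  also have "\<dots> = int u" using u by simp
  finally show "cm l ((u + a) mod l) a = u" by simp
next
  fix m assume m: "m \<in> {..<l}"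
  hence l: "0 < l" by auto
  have "int ((cm l m a + a) mod l) = ((int m - int a) mod int l + int a) mod int l" using l by (simp add: cm_int zmod_int)
  also have "\<dots> = (int m - int a + int a) mod int l" by (simp add: mod_add_left_eq)
  also have "\<dots> = int m" using m by simp
  finally show "(cm l m a + a) mod l = m" by simp
qed (auto simp: cm_lt)



lemma tprod_alt: "tprod l q A B = (\<lambda>i j k. if k < l then
      (\<Sum>m<l. \<Sum>r<q. A i r (cm l k m) * B r j m) else 0)"
  unfolding tprod_def cm_def by simp

lemma ttrans_alt: "ttrans l A = (\<lambda>i j k. if k < l then A j i (cm l 0 k) else 0)"
  unfolding ttrans_def by (auto simp: fun_eq_iff trans_idx)

lemma tprod_assoc: "tprod l q (tprod l r A B) C = tprod l r A (tprod l q B C)"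
proof (rule ext, rule ext, rule ext)
  fix i j k
  show "tprod l q (tprod l r A B) C i j k = tprod l r A (tprod l q B C) i j k"
  proof (cases "k < l")
    case True
    hence l: "0 < l" by simp
    have inner: "(\<Sum>m'<l. \<Sum>t<r. A i t (cm l (cm l k m) m') * B t s m') =
        (\<Sum>u<l. \<Sum>t<r. A i t (cm l k u) * B t s (cm l u m))" for m s
      using sum_shift[of "\<lambda>x. \<Sum>t<r. A i t (cm l (cm l k m) x) * B t s x" l m]
      by (simp add: cm_cm[OF l])
    have "tprod l q (tprod l r A B) C i j k =
       (\<Sum>m<l. \<Sum>s<q. (\<Sum>u<l. \<Sum>t<r. A i t (cm l k u) * B t s (cm l u m)) * C s j m)"
      using True l by (simp add: tprod_alt cm_lt inner)
    also have "\<dots> = (\<Sum>m<l. \<Sum>s<q. \<Sum>u<l. \<Sum>t<r. A i t (cm l k u) * B t s (cm l u m) * C s j m)"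
      by (simp add: sum_distrib_right)
    also have "\<dots> = (\<Sum>m<l. \<Sum>u<l. \<Sum>s<q. \<Sum>t<r. A i t (cm l k u) * B t s (cm l u m) * C s j m)"
      by (rule sum.cong[OF refl], rule sum.swap)
    also have "\<dots> = (\<Sum>u<l. \<Sum>m<l. \<Sum>s<q. \<Sum>t<r. A i t (cm l k u) * B t s (cm l u m) * C s j m)"
      by (rule sum.swap)
    also have "\<dots> = (\<Sum>u<l. \<Sum>m<l. \<Sum>t<r. \<Sum>s<q. A i t (cm l k u) * B t s (cm l u m) * C s j m)"
      by (rule sum.cong[OF refl], rule sum.cong[OF refl], rule sum.swap)
    also have "\<dots> = (\<Sum>u<l. \<Sum>t<r. \<Sum>m<l. \<Sum>s<q. A i t (cm l k u) * B t s (cm l u m) * C s j m)"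
      by (rule sum.cong[OF refl], rule sum.swap)
    also have "\<dots> = tprod l r A (tprod l q B C) i j k"
      using True l by (simp add: tprod_alt cm_lt sum_distrib_left mult.assoc)
    finally show ?thesis .
  qed (simp add: tprod_alt)
qed

lemma ttrans_tprod: "ttrans l (tprod l q A B) = tprod l q (ttrans l B) (ttrans l A)"
proof (rule ext, rule ext, rule ext)
  fix i j k
  show "ttrans l (tprod l q A B) i j k = tprod l q (ttrans l B) (ttrans l A) i j k"
  proof (cases "k < l")
    case True
    hence l: "0 < l" by simp
    have e1: "cm l 0 (cm l k m) = cm l m k" for m using cm_cm[OF l, of m m k] by simp
    have e2: "cm l 0 m = cm l (cm l 0 k) (cm l m k)" for m using cm_cm[OF l, of 0 k m] by simp
    have "tprod l q (ttrans l B) (ttrans l A) i j k =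
       (\<Sum>m<l. \<Sum>r<q. B r i (cm l m k) * A j r (cm l (cm l 0 k) (cm l m k)))"
      using True l by (simp add: tprod_alt ttrans_alt cm_lt e1 e2[symmetric])
    also have "\<dots> = (\<Sum>m<l. \<Sum>r<q. B r i m * A j r (cm l (cm l 0 k) m))"
      by (rule sum_shift[of "\<lambda>x. \<Sum>r<q. B r i x * A j r (cm l (cm l 0 k) x)"])
    also have "\<dots> = ttrans l (tprod l q A B) i j k"
      using True l by (simp add: tprod_alt ttrans_alt cm_lt mult.commute)
    finally show ?thesis ..
  qed (simp add: tprod_alt ttrans_alt)
qed

lemma tensorsD: "A \<in> tensors n p l \<Longrightarrow> (n \<le> i \<or> p \<le> j \<or> l \<le> k) \<Longrightarrow> A i j k = 0"
  unfolding tensors_def by blast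
lemma ttrans_ttrans: assumes A: "A \<in> tensors n p l" shows "ttrans l (ttrans l A) = A"
proof (rule ext, rule ext, rule ext)
  fix i j k
  show "ttrans l (ttrans l A) i j k = A i j k"
  proof (cases "k < l")
    case True
    hence "cm l 0 k < l" by (simp add: cm_lt)
    then show ?thesis using True by (simp add: ttrans_alt cm_inv)
  next
    case False
    then show ?thesis using tensorsD[OF A, of i j k] by (simp add: ttrans_alt)
  qed
qed


lemma tid_left: assumes U: "U \<in> tensors n p l" shows "tprod l n (tid n l) U = U"
proof (rule ext, rule ext, rule ext)
  fix i j k
  show "tprod l n (tid n l) U i j k = U i j k"
  proof (cases "k < l \<and> i < n")
    case True
    have "tid n l i r (cm l k m) * U r j m = (if m = k then (if r = i then U i j k else 0) else 0)"
      if "m < l" "r < n" for m r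
    proof -
      have c: "cm l k m = 0 \<longleftrightarrow> k = m" by (rule cm_eq0) (use True that in auto)
      show ?thesis
      proof (cases "m = k \<and> r = i")
        case True
        then show ?thesis using c \<open>k < l \<and> i < n\<close> by (simp add: tid_def)
      next
        case False
        then have "tid n l i r (cm l k m) = 0" using c unfolding tid_def by auto
        then show ?thesis using False by auto
      qed
    qed
    hence "tprod l n (tid n l) U i j k = (\<Sum>m<l. \<Sum>r<n. (if m = k then (if r = i then U i j k else 0) else 0))"
      using True unfolding tprod_alt by simp
    also have "\<dots> = (\<Sum>m<l. if m = k then U i j k else 0)"
      using True by (intro sum.cong refl) auto
    also have "\<dots> = U i j k" using True by simp
    finally show ?thesis .
  next
    case False
    show ?thesis
    proof (cases "k < l")
      case True
      with False have i: "\<not> i < n" by simp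
      have "tid n l i r x = 0" if "r < n" for r x using i that unfolding tid_def by auto
      then show ?thesis using True tensorsD[OF U, of i j k] i unfolding tprod_alt by simp
    next
      case False
      then show ?thesis using tensorsD[OF U, of i j k] unfolding tprod_alt by simp
    qed
  qed
qed

lemma tid_right: assumes X: "X \<in> tensors n p l" shows "tprod l p X (tid p l) = X"
proof (rule ext, rule ext, rule ext)
  fix i j k
  show "tprod l p X (tid p l) i j k = X i j k"
  proof (cases "k < l \<and> j < p")
    case True
    have "X i r (cm l k m) * tid p l r j m = (if m = 0 then (if r = j then X i j k else 0) else 0)"
      if "m < l" "r < p" for m r
    proof (cases "m = 0 \<and> r = j")
      case True
      then show ?thesis using \<open>k < l \<and> j < p\<close> by (simp add: tid_def cm_0)
    next
      case False
      then have "tid p l r j m = 0" unfolding tid_def by auto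
      then show ?thesis using False by auto
    qed
    hence "tprod l p X (tid p l) i j k = (\<Sum>m<l. \<Sum>r<p. (if m = 0 then (if r = j then X i j k else 0) else 0))"
      using True unfolding tprod_alt by simp
    also have "\<dots> = (\<Sum>m<l. if m = 0 then X i j k else 0)"
      using True by (intro sum.cong refl) auto
    also have "\<dots> = X i j k" using True by simp
    finally show ?thesis .
  next
    case False
    show ?thesis
    proof (cases "k < l")
      case True
      with False have j: "\<not> j < p" by simp
      have "tid p l r j x = 0" if "r < p" for r x using j that unfolding tid_def by auto
      then show ?thesis using True tensorsD[OF X, of i j k] j unfolding tprod_alt by simp
    next
      case False
      then show ?thesis using tensorsD[OF X, of i j k] unfolding tprod_alt by simp
    qed
  qed
qed

lemma ttrans_tid: "ttrans l (tid p l) = tid p l"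
  by (auto simp: fun_eq_iff ttrans_alt tid_def cm_eq0 cm_lt)

lemma tprod_add_left: "tprod l q (tadd A B) C = tadd (tprod l q A C) (tprod l q B C)"
  by (simp add: fun_eq_iff tprod_alt tadd_def algebra_simps sum.distrib)
lemma tprod_add_right: "tprod l q C (tadd A B) = tadd (tprod l q C A) (tprod l q C B)"
  by (simp add: fun_eq_iff tprod_alt tadd_def algebra_simps sum.distrib)
lemma tprod_sub_left: "tprod l q (tsub A B) C = tsub (tprod l q A C) (tprod l q B C)"
  by (simp add: fun_eq_iff tprod_alt tsub_def algebra_simps sum_subtractf)
lemma tprod_sub_right: "tprod l q C (tsub A B) = tsub (tprod l q C A) (tprod l q C B)"
  by (simp add: fun_eq_iff tprod_alt tsub_def algebra_simps sum_subtractf)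
lemma tprod_scale_left: "tprod l q (tscale c A) C = tscale c (tprod l q A C)"
  by (simp add: fun_eq_iff tprod_alt tscale_def algebra_simps sum_distrib_left)
lemma tprod_scale_right: "tprod l q C (tscale c A) = tscale c (tprod l q C A)"
  by (simp add: fun_eq_iff tprod_alt tscale_def algebra_simps sum_distrib_left)
lemma ttrans_add: "ttrans l (tadd A B) = tadd (ttrans l A) (ttrans l B)"
  by (simp add: fun_eq_iff ttrans_alt tadd_def)
lemma ttrans_sub: "ttrans l (tsub A B) = tsub (ttrans l A) (ttrans l B)"
  by (simp add: fun_eq_iff ttrans_alt tsub_def)
lemma ttrans_scale: "ttrans l (tscale c A) = tscale c (ttrans l A)"
  by (simp add: fun_eq_iff ttrans_alt tscale_def)

lemma tprod_tensors: "A \<in> tensors n q l \<Longrightarrow> B \<in> tensors q p l \<Longrightarrow> tprod l q A B \<in> tensors n p l"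
  unfolding tensors_def tprod_alt by auto
lemma ttrans_tensors: "A \<in> tensors p n l \<Longrightarrow> ttrans l A \<in> tensors n p l"
  unfolding tensors_def ttrans_alt by auto
lemma tadd_tensors: "A \<in> tensors n p l \<Longrightarrow> B \<in> tensors n p l \<Longrightarrow> tadd A B \<in> tensors n p l"
  unfolding tensors_def tadd_def by auto
lemma tsub_tensors: "A \<in> tensors n p l \<Longrightarrow> B \<in> tensors n p l \<Longrightarrow> tsub A B \<in> tensors n p l"
  unfolding tensors_def tsub_def by auto
lemma tscale_tensors: "A \<in> tensors n p l \<Longrightarrow> tscale c A \<in> tensors n p l"
  unfolding tensors_def tscale_def by auto
lemma tid_tensors: "tid p l \<in> tensors p p l"
  unfolding tensors_def tid_def by auto


lemma tinner_adj: "tinner n p l (tprod l q A B) C = tinner q p l B (tprod l n (ttrans l A) C)"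
proof (cases "l = 0")
  case True then show ?thesis by (simp add: tinner_def)
next
  case False
  hence l: "0 < l" by simp
  have e: "cm l 0 (cm l m k) = cm l k m" for m k using cm_cm[OF l, of k k m] by simp
  have "tinner n p l (tprod l q A B) C = (\<Sum>i<n. \<Sum>j<p. \<Sum>k<l. \<Sum>m<l. \<Sum>r<q. A i r (cm l k m) * B r j m * C i j k)"
    by (simp add: tinner_def tprod_alt sum_distrib_right)
    also have "\<dots> = (\<Sum>j<p. \<Sum>i<n. \<Sum>k<l. \<Sum>m<l. \<Sum>r<q. A i r (cm l k m) * B r j m * C i j k)"
      by (rule sum.swap)
    also have "\<dots> = (\<Sum>j<p. \<Sum>k<l. \<Sum>i<n. \<Sum>m<l. \<Sum>r<q. A i r (cm l k m) * B r j m * C i j k)"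
      by (rule sum.cong[OF refl], rule sum.swap)
    also have "\<dots> = (\<Sum>j<p. \<Sum>k<l. \<Sum>m<l. \<Sum>i<n. \<Sum>r<q. A i r (cm l k m) * B r j m * C i j k)"
      by (rule sum.cong[OF refl], rule sum.cong[OF refl], rule sum.swap)
    also have "\<dots> = (\<Sum>j<p. \<Sum>k<l. \<Sum>m<l. \<Sum>r<q. \<Sum>i<n. A i r (cm l k m) * B r j m * C i j k)"
      by (rule sum.cong[OF refl], rule sum.cong[OF refl], rule sum.cong[OF refl], rule sum.swap)
    also have "\<dots> = (\<Sum>j<p. \<Sum>m<l. \<Sum>k<l. \<Sum>r<q. \<Sum>i<n. A i r (cm l k m) * B r j m * C i j k)"
      by (rule sum.cong[OF refl], rule sum.swap)
    also have "\<dots> = (\<Sum>j<p. \<Sum>m<l. \<Sum>r<q. \<Sum>k<l. \<Sum>i<n. A i r (cm l k m) * B r j m * C i j k)"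
      by (rule sum.cong[OF refl], rule sum.cong[OF refl], rule sum.swap)
    also have "\<dots> = (\<Sum>j<p. \<Sum>r<q. \<Sum>m<l. \<Sum>k<l. \<Sum>i<n. A i r (cm l k m) * B r j m * C i j k)"
      by (rule sum.cong[OF refl], rule sum.swap)
    also have "\<dots> = (\<Sum>r<q. \<Sum>j<p. \<Sum>m<l. \<Sum>k<l. \<Sum>i<n. A i r (cm l k m) * B r j m * C i j k)"
      by (rule sum.swap)
    also have "\<dots> = tinner q p l B (tprod l n (ttrans l A) C)"
      using l by (simp add: tinner_def tprod_alt ttrans_alt cm_lt sum_distrib_left e mult.commute mult.left_commute)
  finally show ?thesis .
qed

lemma tinner_trans: "tinner p p l (ttrans l A) (ttrans l B) = tinner p p l A B"
proof -
  have "tinner p p l (ttrans l A) (ttrans l B) = (\<Sum>i<p. \<Sum>j<p. \<Sum>k<l. A j i (cm l 0 k) * B j i (cm l 0 k))"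
    by (simp add: tinner_def ttrans_alt)
  also have "\<dots> = (\<Sum>j<p. \<Sum>i<p. \<Sum>k<l. A j i (cm l 0 k) * B j i (cm l 0 k))" by (rule sum.swap)
  also have "\<dots> = tinner p p l A B" unfolding tinner_def
    by (rule sum.cong[OF refl], rule sum.cong[OF refl], rule sum_refl[of "\<lambda>k. A _ _ k * B _ _ k"])
  finally show ?thesis .
qed

lemma tinner_add_left: "tinner n p l (tadd A B) C = tinner n p l A C + tinner n p l B C"
  by (simp add: tinner_def tadd_def algebra_simps sum.distrib)
lemma tinner_sub_left: "tinner n p l (tsub A B) C = tinner n p l A C - tinner n p l B C"
  by (simp add: tinner_def tsub_def algebra_simps sum_subtractf)
lemma tinner_scale_left: "tinner n p l (tscale c A) C = c * tinner n p l A C"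
  by (simp add: tinner_def tscale_def algebra_simps sum_distrib_left)
lemma tinner_comm: "tinner n p l A B = tinner n p l B A"
  by (simp add: tinner_def mult.commute)
lemma tinner_sub_right: "tinner n p l C (tsub A B) = tinner n p l C A - tinner n p l C B"
  by (simp add: tinner_def tsub_def algebra_simps sum_subtractf)
lemma tinner_scale_right: "tinner n p l C (tscale c A) = c * tinner n p l C A"
  by (simp add: tinner_def tscale_def algebra_simps sum_distrib_left)
lemma tinner_nonneg: "0 \<le> tinner n p l A A"
  by (simp add: tinner_def sum_nonneg)




lemma sum_split: fixes l n :: nat shows "(\<Sum>c<l*n. f c) = (\<Sum>m<l. \<Sum>r<n. (f (m*n + r) :: real))"
proof -
  have s: "sum f {a..<a+n} = (\<Sum>r<n. f (a + r))" for a by (induct n) auto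
  have "(\<Sum>c<l*n. f c) = (\<Sum>m<l. sum f {m*n..<m*n+n})" by (rule sum.nat_group[symmetric])
  also have "\<dots> = (\<Sum>m<l. \<Sum>r<n. f (m*n + r))" by (simp add: s)
  finally show ?thesis .
qed

definition bc :: "nat \<Rightarrow> nat \<Rightarrow> tensor \<Rightarrow> real Matrix.mat" where
  "bc n l M = Matrix.mat (l*n) (l*n) (\<lambda>(a,b). M (a mod n) (b mod n) (cm l (a div n) (b div n)))"

lemma bc_carrier: "bc n l M \<in> carrier_mat (l*n) (l*n)"
  unfolding bc_def by simp

lemma bc_inj:
  assumes skew: "\<And>i j k. k < l \<Longrightarrow> W j i (cm l 0 k) = - W i j k"
    and v: "v \<in> carrier_vec (l*n)"
    and z: "bc n l (tsub (tid n l) (tscale t W)) *\<^sub>v v = 0\<^sub>v (l*n)"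
  shows "v = 0\<^sub>v (l*n)"
proof -
  let ?N = "l*n"
  define Wc where "Wc a b = W (a mod n) (b mod n) (cm l (a div n) (b div n))" for a b
  have dv: "dim_vec v = ?N" using v by simp
  have tidc: "tid n l (a mod n) (b mod n) (cm l (a div n) (b div n)) = (if a = b then 1 else 0)"
    if "a < ?N" "b < ?N" for a b
  proof -
    have "0 < l * n" using that(1) by linarith
    hence n: "0 < n" and l: "0 < l" by (simp_all add: zero_less_mult_iff)
    have ad: "a div n < l" "b div n < l" using that n by (simp_all add: div_less_iff_less_mult mult.commute)
    have "cm l (a div n) (b div n) = 0 \<longleftrightarrow> a div n = b div n" using cm_eq0[OF ad] .
    moreover have "a = b \<longleftrightarrow> a mod n = b mod n \<and> a div n = b div n"
      by (metis div_mult_mod_eq)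
    ultimately show ?thesis using n l unfolding tid_def by auto
  qed
  have Wskew: "Wc b a = - Wc a b" if "a < ?N" "b < ?N" for a b
  proof -
    have "0 < l * n" using that(1) by linarith
    hence n: "0 < n" and l: "0 < l" by (simp_all add: zero_less_mult_iff)
    have e: "cm l 0 (cm l (a div n) (b div n)) = cm l (b div n) (a div n)"
      using cm_cm[OF l, of "b div n" "b div n" "a div n"] by simp
    show ?thesis unfolding Wc_def using skew[of "cm l (a div n) (b div n)" "b mod n" "a mod n"] e cm_lt[OF l]
      by simp
  qed
  have row: "(\<Sum>b<?N. (if a = b then 1 else 0) * v $ b - t * (Wc a b * v $ b)) = 0" if "a < ?N" for a
  proof -
    have "(bc n l (tsub (tid n l) (tscale t W)) *\<^sub>v v) $ a = 0" using z that by simp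
    hence "(\<Sum>b\<in>{0..<?N}. (tid n l (a mod n) (b mod n) (cm l (a div n) (b div n)) - t * Wc a b) * v $ b) = 0"
      using that dv unfolding bc_def Wc_def
      by (simp add: mult_mat_vec_def scalar_prod_def row_def tsub_def tscale_def)
    moreover have "(\<Sum>b<?N. (if a = b then 1 else 0) * v $ b - t * (Wc a b * v $ b)) =
       (\<Sum>b\<in>{0..<?N}. (tid n l (a mod n) (b mod n) (cm l (a div n) (b div n)) - t * Wc a b) * v $ b)"
      unfolding atLeast0LessThan by (rule sum.cong) (auto simp: tidc[OF that] algebra_simps)
    ultimately show ?thesis by simp
  qed
  have d: "(\<Sum>b<?N. (if a = b then 1 else 0) * v $ b) = v $ a" if "a < ?N" for a
  proof -
    have "(\<Sum>b<?N. (if a = b then 1 else 0) * v $ b) = (\<Sum>b<?N. if a = b then v $ b else 0)"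
      by (intro sum.cong) auto
    also have "\<dots> = v $ a" using that by simp
    finally show ?thesis .
  qed
  have "v $ a * v $ a - t * (\<Sum>b<?N. v $ a * Wc a b * v $ b) = 0" if "a < ?N" for a
  proof -
    have "v $ a * (\<Sum>b<?N. (if a = b then 1 else 0) * v $ b - t * (Wc a b * v $ b)) = 0"
      using row[OF that] by simp
    thus ?thesis
      by (simp add: sum_subtractf d[OF that] right_diff_distrib sum_distrib_left mult.assoc mult.left_commute)
  qed
  hence "(\<Sum>a<?N. v $ a * v $ a - t * (\<Sum>b<?N. v $ a * Wc a b * v $ b)) = 0" by simp
  hence A: "(\<Sum>a<?N. v $ a * v $ a) - t * (\<Sum>a<?N. \<Sum>b<?N. v $ a * Wc a b * v $ b) = 0"
    by (simp add: sum_subtractf sum_distrib_left)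
  define S where "S = (\<Sum>a<?N. \<Sum>b<?N. v $ a * Wc a b * v $ b)"
  have "S = (\<Sum>b<?N. \<Sum>a<?N. v $ a * Wc a b * v $ b)" unfolding S_def by (rule sum.swap)
  also have "\<dots> = (\<Sum>b<?N. \<Sum>a<?N. - (v $ b * Wc b a * v $ a))"
  proof (intro sum.cong refl)
    fix b a assume "b \<in> {..<?N}" "a \<in> {..<?N}"
    then have "Wc a b = - Wc b a" using Wskew[of b a] by simp
    then show "v $ a * Wc a b * v $ b = - (v $ b * Wc b a * v $ a)" by simp
  qed
  also have "\<dots> = - S" unfolding S_def by (simp add: sum_negf)
  finally have "S = 0" by simp
  with A have "(\<Sum>a<?N. v $ a * v $ a) = 0" unfolding S_def by simp
  hence "\<forall>a\<in>{..<?N}. v $ a * v $ a = 0" by (subst sum_nonneg_eq_0_iff[symmetric]) auto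
  thus ?thesis using dv by (intro eq_vecI) auto
qed


lemma idx_mod: "i < (n::nat) \<Longrightarrow> (k*n+i) mod n = i" by simp
lemma idx_div: "i < (n::nat) \<Longrightarrow> (k*n+i) div n = k" by simp
lemma idx_lt: "i < (n::nat) \<Longrightarrow> k < l \<Longrightarrow> k*n+i < l*n"
proof -
  assume "i < n" "k < l"
  hence "k*n + i < k*n + n" by simp
  also have "\<dots> = Suc k * n" by simp
  also have "\<dots> \<le> l * n" using \<open>k < l\<close> by (intro mult_right_mono) auto
  finally show ?thesis .
qed

lemma inv_exists:
  assumes Wt: "W \<in> tensors n n l" and skew: "\<And>i j k. k < l \<Longrightarrow> W j i (cm l 0 k) = - W i j k"
  shows "\<exists>Y \<in> tensors n n l. tprod l n (tsub (tid n l) (tscale t W)) Y = tid n l"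
proof -
  let ?M = "tsub (tid n l) (tscale t W)"
  let ?B = "bc n l ?M"
  have "det ?B \<noteq> 0" using det_0_iff_vec_prod_zero[OF bc_carrier] bc_inj[of l W, OF skew, of _ n t] by blast
  from det_non_zero_imp_unit[OF bc_carrier this, of "()"]
  obtain Bi where Bi: "Bi \<in> carrier_mat (l*n) (l*n)" "?B * Bi = 1\<^sub>m (l*n)"
    unfolding Units_def ring_mat_def by auto
  define Y where "Y = (\<lambda>i j k. if i < n \<and> j < n \<and> k < l then Bi $$ (k*n + i, j) else 0)"
  have Yt: "Y \<in> tensors n n l" by (auto simp: tensors_def Y_def)
  have "tprod l n ?M Y = tid n l"
  proof (rule ext, rule ext, rule ext)
    fix i j k
    show "tprod l n ?M Y i j k = tid n l i j k"
    proof (cases "i < n \<and> j < n \<and> k < l")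
      case True
      hence ij: "k*n + i < l*n" "j < l*n" using idx_lt[of i n k l] idx_lt[of j n 0 l] by auto
      have tm: "?M i r (cm l k m) * Y r j m = ?B $$ (k*n+i, m*n+r) * Bi $$ (m*n+r, j)"
        if "m < l" "r < n" for m r
        using that True ij idx_lt[of r n m l] unfolding bc_def Y_def by simp
      have "tprod l n ?M Y i j k = (\<Sum>m<l. \<Sum>r<n. ?B $$ (k*n+i, m*n+r) * Bi $$ (m*n+r, j))"
        using True by (simp add: tprod_alt tm)
      also have "\<dots> = (\<Sum>c<l*n. ?B $$ (k*n+i, c) * Bi $$ (c, j))" by (rule sum_split[symmetric])
      also have "\<dots> = (?B * Bi) $$ (k*n+i, j)"
        using Bi(1) ij bc_carrier[of n l ?M]
        by (simp add: index_mult_mat scalar_prod_def row_def col_def atLeast0LessThan)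
      also have "\<dots> = (if k*n+i = j then 1 else 0)" using Bi ij by simp
      also have "\<dots> = tid n l i j k"
      proof (cases "k = 0")
        case False
        hence "n \<le> k*n" by simp
        hence "k*n+i \<noteq> j" using True by linarith
        thus ?thesis using False by (simp add: tid_def)
      qed (use True in \<open>auto simp: tid_def\<close>)
      finally show ?thesis .
    next
      case False
      show ?thesis
      proof (cases "k < l")
        case True
        show ?thesis
        proof (cases "j < n")
          case True
          with False \<open>k < l\<close> have i: "\<not> i < n" by simp
          have "?M i r x = 0" if "r < n" for r x
            using i that tensorsD[OF Wt, of i r x] by (auto simp: tsub_def tscale_def tid_def)
          then show ?thesis using \<open>k < l\<close> i by (simp add: tprod_alt tid_def)
        next
          case False
          then show ?thesis using \<open>k < l\<close> by (simp add: tprod_alt tid_def Y_def)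
        qed
      next
        case False
        then show ?thesis by (auto simp: tprod_alt tid_def)
      qed
    qed
  qed
  thus ?thesis using Yt by blast
qed




lemma tprod_bound:
  assumes "\<And>a b c. \<bar>B a b c\<bar> \<le> K"
  shows "\<bar>tprod l q A B i j k\<bar> \<le> (\<Sum>m<l. \<Sum>r<q. \<bar>A i r (cm l k m)\<bar>) * K"
proof -
  have K: "0 \<le> K" using assms[of 0 0 0] by linarith
  have "\<bar>\<Sum>m<l. \<Sum>r<q. A i r (cm l k m) * B r j m\<bar> \<le> (\<Sum>m<l. \<Sum>r<q. \<bar>A i r (cm l k m) * B r j m\<bar>)"
    by (rule order_trans[OF sum_abs], rule sum_mono, rule sum_abs)
  also have "\<dots> \<le> (\<Sum>m<l. \<Sum>r<q. \<bar>A i r (cm l k m)\<bar> * K)"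
    by (intro sum_mono) (simp add: abs_mult mult_left_mono assms)
  also have "\<dots> = (\<Sum>m<l. \<Sum>r<q. \<bar>A i r (cm l k m)\<bar>) * K" by (simp add: sum_distrib_right)
  finally show ?thesis using K by (simp add: tprod_alt sum_nonneg mult_nonneg_nonneg)
qed

lemma tprod_tendsto_right:
  assumes "\<And>a b c. ((\<lambda>t. B t a b c) \<longlongrightarrow> B0 a b c) F"
  shows "((\<lambda>t. tprod l q A (B t) i j k) \<longlongrightarrow> tprod l q A B0 i j k) F"
  unfolding tprod_alt by (auto intro!: tendsto_intros assms)

lemma tprod_tendsto_left:
  assumes "\<And>a b c. ((\<lambda>t. A t a b c) \<longlongrightarrow> A0 a b c) F"
  shows "((\<lambda>t. tprod l q (A t) B i j k) \<longlongrightarrow> tprod l q A0 B i j k) F"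
  unfolding tprod_alt by (auto intro!: tendsto_intros assms)

lemma skew_entry: "ttrans l W = tscale (-1) W \<Longrightarrow> k < l \<Longrightarrow> W j i (cm l 0 k) = - W i j k"
  by (drule fun_cong[where x=i], drule fun_cong[where x=j], drule fun_cong[where x=k])
     (simp add: ttrans_alt tscale_def)

lemma norm_ineq:
  assumes Wsk: "ttrans l W = tscale (-1) W" and Z: "Z \<in> tensors n q l"
  shows "tinner n q l Z Z \<le> tinner n q l (tprod l n (tsub (tid n l) (tscale t W)) Z) (tprod l n (tsub (tid n l) (tscale t W)) Z)"
proof -
  define D where "D = tprod l n W Z"
  have MZ: "tprod l n (tsub (tid n l) (tscale t W)) Z = tsub Z (tscale t D)"
    unfolding D_def by (simp add: tprod_sub_left tprod_scale_left tid_left[OF Z])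
  have "tinner n q l D Z = tinner n q l Z (tprod l n (ttrans l W) Z)"
    unfolding D_def by (rule tinner_adj)
  also have "\<dots> = - tinner n q l D Z"
    unfolding Wsk D_def by (simp add: tprod_scale_left tinner_scale_right tinner_comm)
  finally have DZ: "tinner n q l D Z = 0" by simp
  have "tinner n q l (tsub Z (tscale t D)) (tsub Z (tscale t D)) =
      tinner n q l Z Z - 2 * t * tinner n q l D Z + t * t * tinner n q l D D"
    by (simp add: tinner_sub_left tinner_sub_right tinner_scale_left tinner_scale_right tinner_comm[of n q l Z D] algebra_simps)
  thus ?thesis using DZ MZ tinner_nonneg[of n q l D] by simp
qed

lemma entry_bound:
  assumes "A \<in> tensors n q l" "tinner n q l A A \<le> T"
  shows "\<bar>A a b c\<bar> \<le> 1 + T"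
proof (cases "a < n \<and> b < q \<and> c < l")
  case True
  have "A a b c * A a b c \<le> (\<Sum>k<l. A a b k * A a b k)"
    using True by (intro member_le_sum) auto
  also have "\<dots> \<le> (\<Sum>j<q. \<Sum>k<l. A a j k * A a j k)"
    using True by (intro member_le_sum[of b _ "\<lambda>j. \<Sum>k<l. A a j k * A a j k"]) (auto intro: sum_nonneg)
  also have "\<dots> \<le> tinner n q l A A" unfolding tinner_def
    using True by (intro member_le_sum[of a _ "\<lambda>i. \<Sum>j<q. \<Sum>k<l. A i j k * A i j k"]) (auto intro!: sum_nonneg)
  finally have sq: "A a b c * A a b c \<le> T" using assms(2) by linarith
  show ?thesis
  proof (cases "\<bar>A a b c\<bar> \<le> 1")
    case True
    then show ?thesis using sq by (smt (verit) zero_le_square)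
  next
    case False
    then have "\<bar>A a b c\<bar> * 1 \<le> \<bar>A a b c\<bar> * \<bar>A a b c\<bar>" by (intro mult_left_mono) auto
    then show ?thesis using sq by (simp add: abs_mult_self_eq)
  qed
next
  case False
  then have "A a b c = 0" using tensorsD[OF assms(1), of a b c] by auto
  moreover have "0 \<le> T" using assms(2) tinner_nonneg[of n q l A] by linarith
  ultimately show ?thesis by simp
qed


lemma stiefelD: "X \<in> stiefel n p l \<Longrightarrow> X \<in> tensors n p l"
  "X \<in> stiefel n p l \<Longrightarrow> tprod l n (ttrans l X) X = tid p l"
  unfolding stiefel_def by auto

lemma W_construct:
  assumes X: "X \<in> stiefel n p l" and V: "V \<in> tensors n p l"
    and sk: "ttrans l (tprod l n (ttrans l X) V) = tscale (-1) (tprod l n (ttrans l X) V)"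
  shows "\<exists>W. W \<in> tensors n n l \<and> ttrans l W = tscale (-1) W \<and> tprod l n W X = tscale (1/2) V"
proof -
  have Xt: "X \<in> tensors n p l" and XX: "tprod l n (ttrans l X) X = tid p l" using stiefelD[OF X] by auto
  define K where "K = tprod l n (ttrans l X) V"
  have Kt: "K \<in> tensors p p l" unfolding K_def by (intro tprod_tensors ttrans_tensors Xt V)
  define B where "B = tsub V (tscale (1/2) (tprod l p X K))"
  have Bt: "B \<in> tensors n p l" unfolding B_def by (intro tsub_tensors tscale_tensors tprod_tensors V Xt Kt)
  define W where "W = tscale (1/2) (tsub (tprod l p B (ttrans l X)) (tprod l p X (ttrans l B)))"
  have Wt: "W \<in> tensors n n l" unfolding W_def
    by (intro tsub_tensors tscale_tensors tprod_tensors ttrans_tensors Xt Bt)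
  have Wsk: "ttrans l W = tscale (-1) W"
    unfolding W_def ttrans_scale ttrans_sub ttrans_tprod ttrans_ttrans[OF Xt] ttrans_ttrans[OF Bt]
    by (simp add: fun_eq_iff tscale_def tsub_def)
  have XB: "tprod l n (ttrans l X) B = tscale (1/2) K"
  proof -
    have "tprod l n (ttrans l X) (tprod l p X K) = K"
      by (simp only: tprod_assoc[symmetric] XX tid_left[OF Kt])
    thus ?thesis unfolding B_def tprod_sub_right tprod_scale_right K_def[symmetric]
      by (simp add: fun_eq_iff tsub_def tscale_def)
  qed
  have BX: "tprod l n (ttrans l B) X = tscale (-1/2) K"
  proof -
    have "tprod l n (ttrans l B) X = ttrans l (tprod l n (ttrans l X) B)"
      by (simp add: ttrans_tprod ttrans_ttrans[OF Xt])
    also have "\<dots> = tscale (-1/2) K" unfolding XB ttrans_scale K_def sk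
      by (simp add: fun_eq_iff tscale_def)
    finally show ?thesis .
  qed
  have "tprod l n W X = tscale (1/2) (tsub (tprod l p B (tprod l n (ttrans l X) X)) (tprod l p X (tprod l n (ttrans l B) X)))"
    unfolding W_def by (simp add: tprod_scale_left tprod_sub_left tprod_assoc)
  also have "\<dots> = tscale (1/2) (tsub B (tprod l p X (tscale (-1/2) K)))"
    unfolding XX BX tid_right[OF Bt] ..
  also have "\<dots> = tscale (1/2) V"
    unfolding B_def tprod_scale_right by (simp add: fun_eq_iff tscale_def tsub_def)
  finally show ?thesis using Wt Wsk by blast
qed


lemma curve:
  assumes X: "X \<in> stiefel n p l" and Wt: "W \<in> tensors n n l" and Wsk: "ttrans l W = tscale (-1) W"
  shows "tscale 2 (tprod l n W X) \<in> tangent_space n p l X"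
proof -
  have Xt: "X \<in> tensors n p l" and XX: "tprod l n (ttrans l X) X = tid p l" using stiefelD[OF X] by auto
  define M where "M t = tsub (tid n l) (tscale t W)" for t
  define P where "P t = tadd (tid n l) (tscale t W)" for t
  have ex: "\<exists>Y. Y \<in> tensors n n l \<and> tprod l n (M t) Y = tid n l" for t
    using inv_exists[OF Wt skew_entry[OF Wsk]] unfolding M_def by blast
  define Y where "Y t = (SOME Y. Y \<in> tensors n n l \<and> tprod l n (M t) Y = tid n l)" for t
  have Yt: "Y t \<in> tensors n n l" and MY: "tprod l n (M t) (Y t) = tid n l" for t
    using someI_ex[OF ex[of t]] unfolding Y_def by auto
  have Mt: "M t \<in> tensors n n l" and Pt: "P t \<in> tensors n n l" for t
    unfolding M_def P_def by (intro tsub_tensors tadd_tensors tscale_tensors tid_tensors Wt)+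
  have PT: "ttrans l (P t) = M t" for t
    unfolding P_def M_def ttrans_add ttrans_tid ttrans_scale Wsk by (simp add: fun_eq_iff tadd_def tsub_def tscale_def)
  have MT: "ttrans l (M t) = P t" for t
    unfolding P_def M_def ttrans_sub ttrans_tid ttrans_scale Wsk by (simp add: fun_eq_iff tadd_def tsub_def tscale_def)
  have comm: "tprod l n (M t) (P t) = tprod l n (P t) (M t)" for t
    unfolding M_def P_def tprod_sub_left tprod_add_left tprod_add_right tprod_sub_right tprod_scale_left
      tprod_scale_right tid_left[OF tid_tensors] tid_left[OF Wt] tid_right[OF Wt]
    by (simp add: fun_eq_iff tadd_def tsub_def tscale_def algebra_simps)
  define Q where "Q t = tprod l n (P t) (Y t)" for t
  have Qt: "Q t \<in> tensors n n l" for t unfolding Q_def by (intro tprod_tensors Pt Yt)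
  have QQ: "tprod l n (ttrans l (Q t)) (Q t) = tid n l" for t
  proof -
    have "tprod l n (ttrans l (Q t)) (Q t) = tprod l n (ttrans l (Y t)) (tprod l n (tprod l n (M t) (P t)) (Y t))"
      unfolding Q_def ttrans_tprod PT by (simp only: tprod_assoc)
    also have "\<dots> = tprod l n (ttrans l (Y t)) (P t)"
      unfolding comm by (simp only: tprod_assoc MY tid_right[OF Pt])
    also have "\<dots> = ttrans l (tprod l n (M t) (Y t))"
      unfolding ttrans_tprod MT ..
    also have "\<dots> = tid n l" unfolding MY ttrans_tid ..
    finally show ?thesis .
  qed
  define \<gamma> where "\<gamma> t = tprod l n (Q t) X" for t
  have st: "\<gamma> t \<in> stiefel n p l" for t
  proof -
    have "tprod l n (ttrans l (\<gamma> t)) (\<gamma> t) = tprod l n (ttrans l X) (tprod l n (tprod l n (ttrans l (Q t)) (Q t)) X)"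
      unfolding \<gamma>_def ttrans_tprod by (simp only: tprod_assoc)
    also have "\<dots> = tid p l" unfolding QQ tid_left[OF Xt] XX ..
    finally show ?thesis unfolding stiefel_def \<gamma>_def using tprod_tensors[OF Qt Xt] by auto
  qed
  have Yeq: "Y t a b c = tid n l a b c + t * tprod l n W (Y t) a b c" for t a b c
  proof -
    have "tsub (Y t) (tscale t (tprod l n W (Y t))) = tid n l"
      using MY[of t] unfolding M_def tprod_sub_left tprod_scale_left tid_left[OF Yt] .
    from fun_cong[OF fun_cong[OF fun_cong[OF this, of a], of b], of c]
    show ?thesis by (simp add: tsub_def tscale_def)
  qed
  have Qeq: "Q t = tadd (tid n l) (tscale (2*t) (tprod l n W (Y t)))" for t
    unfolding Q_def P_def tprod_add_left tprod_scale_left tid_left[OF Yt]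
    by (simp add: fun_eq_iff tadd_def tscale_def Yeq[of t])
  have geq: "\<gamma> t i j k = X i j k + t * (2 * tprod l n (tprod l n W (Y t)) X i j k)" for t i j k
    unfolding \<gamma>_def Qeq tprod_add_left tprod_scale_left tid_left[OF Xt] by (simp add: tadd_def tscale_def)
  have M0: "M 0 = tid n l" unfolding M_def by (simp add: fun_eq_iff tsub_def tscale_def)
  have Y0: "Y 0 = tid n l" using MY[of 0] unfolding M0 tid_left[OF Yt] .
  have g0: "\<gamma> 0 = X" by (simp add: fun_eq_iff geq)
  define T0 where "T0 = tinner n n l (tid n l) (tid n l)"
  have Ybd: "\<bar>Y t a b c\<bar> \<le> 1 + T0" for t a b c
  proof (rule entry_bound[OF Yt])
    show "tinner n n l (Y t) (Y t) \<le> T0"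
      using norm_ineq[OF Wsk Yt[of t], of t] MY[of t] unfolding M_def T0_def by simp
  qed
  have Ylim: "((\<lambda>t. Y t a b c) \<longlongrightarrow> tid n l a b c) (at 0)" for a b c
  proof -
    define C where "C = (\<Sum>m<l. \<Sum>r<n. \<bar>W a r (cm l c m)\<bar>) * (1 + T0)"
    have "((\<lambda>t. Y t a b c - tid n l a b c) \<longlongrightarrow> 0) (at 0)"
    proof (rule Lim_null_comparison)
      show "\<forall>\<^sub>F t in at 0. norm (Y t a b c - tid n l a b c) \<le> \<bar>t\<bar> * C"
      proof (rule always_eventually, rule allI)
        fix t
        have "norm (Y t a b c - tid n l a b c) = \<bar>t\<bar> * \<bar>tprod l n W (Y t) a b c\<bar>"
          using Yeq[of t a b c] by (simp add: abs_mult)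
        also have "\<dots> \<le> \<bar>t\<bar> * C" unfolding C_def
          by (intro mult_left_mono tprod_bound Ybd) auto
        finally show "norm (Y t a b c - tid n l a b c) \<le> \<bar>t\<bar> * C" .
      qed
      show "((\<lambda>t. \<bar>t\<bar> * C) \<longlongrightarrow> 0) (at 0)"
        by (rule tendsto_mult_left_zero, rule tendsto_rabs_zero, rule tendsto_ident_at)
    qed
    thus ?thesis by (simp add: LIM_zero_iff)
  qed
  have deriv: "((\<lambda>t. \<gamma> t i j k) has_real_derivative tscale 2 (tprod l n W X) i j k) (at 0)" for i j k
  proof -
    define g where "g t = 2 * tprod l n (tprod l n W (Y t)) X i j k" for t
    have "(g \<longlongrightarrow> 2 * tprod l n (tprod l n W (tid n l)) X i j k) (at 0)"
      unfolding g_def by (intro tendsto_mult_left tprod_tendsto_left tprod_tendsto_right Ylim)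
    hence "isCont g 0" unfolding isCont_def g_def Y0 .
    moreover have "g 0 = tscale 2 (tprod l n W X) i j k"
      unfolding g_def Y0 tid_right[OF Wt] by (simp add: tscale_def)
    moreover have "\<forall>z. \<gamma> z i j k - \<gamma> 0 i j k = g z * (z - 0)"
      unfolding g0 by (simp add: geq g_def)
    ultimately show ?thesis unfolding CARAT_DERIV by blast
  qed
  show ?thesis unfolding tangent_space_def mem_Collect_eq
    using g0 st deriv by (intro exI[of _ \<gamma>] exI[of _ "1::real"]) auto
qed


lemma tangent_nec:
  assumes X: "X \<in> stiefel n p l" and V: "V \<in> tangent_space n p l X"
  shows "tadd (tprod l n (ttrans l X) V) (tprod l n (ttrans l V) X) = (\<lambda>i j k. 0)"
proof -
  obtain \<gamma> \<epsilon> where e: "0 < \<epsilon>" and g0: "\<gamma> 0 = X"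
    and st: "\<And>t. \<bar>t\<bar> < \<epsilon> \<Longrightarrow> \<gamma> t \<in> stiefel n p l"
    and d: "\<And>i j k. ((\<lambda>t. \<gamma> t i j k) has_real_derivative V i j k) (at 0)"
    using V unfolding tangent_space_def by blast
  show ?thesis
  proof (rule ext, rule ext, rule ext)
    fix i j k
    show "tadd (tprod l n (ttrans l X) V) (tprod l n (ttrans l V) X) i j k = 0"
    proof (cases "k < l")
      case True
      hence l: "0 < l" by simp
      define c where "c m = cm l 0 (cm l k m)" for m
      have cl: "c m < l" for m unfolding c_def using cm_lt[OF l] .
      define f where "f t = (\<Sum>m<l. \<Sum>r<n. \<gamma> t r i (c m) * \<gamma> t r j m)" for t
      have feq: "f t = tid p l i j k" if "t \<in> ball 0 \<epsilon>" for t
      proof -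
        have "\<bar>t\<bar> < \<epsilon>" using that by (simp add: dist_real_def)
        from stiefelD(2)[OF st[OF this]]
        have "tprod l n (ttrans l (\<gamma> t)) (\<gamma> t) i j k = tid p l i j k" by simp
        thus ?thesis using True cm_lt[OF l] unfolding f_def c_def by (simp add: tprod_alt ttrans_alt)
      qed
      have tm: "((\<lambda>t. \<gamma> t r i (c m) * \<gamma> t r j m) has_real_derivative
                 (V r i (c m) * X r j m + X r i (c m) * V r j m)) (at 0)" for m r
        using DERIV_mult[OF d d, of r i "c m" r j m] g0 by (simp add: mult.commute)
      have D1: "(f has_real_derivative (\<Sum>m<l. \<Sum>r<n. V r i (c m) * X r j m + X r i (c m) * V r j m)) (at 0)"
        unfolding f_def by (intro DERIV_sum tm)
      have D2: "(f has_real_derivative 0) (at 0)"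
        by (rule has_field_derivative_transform_within_open[OF DERIV_const open_ball, of _ 0 \<epsilon>])
           (use e feq in auto)
      have "(\<Sum>m<l. \<Sum>r<n. V r i (c m) * X r j m + X r i (c m) * V r j m) = 0"
        using DERIV_unique[OF D1 D2] .
      thus ?thesis using True cl cm_lt[OF l] unfolding c_def
        by (simp add: tadd_def tprod_alt ttrans_alt sum.distrib[symmetric] algebra_simps)
    qed (simp add: tadd_def tprod_alt)
  qed
qed


theorem mainTheorem3:
  fixes n p l :: nat and X :: tensor
  assumes "p \<le> n" and "X \<in> stiefel n p l"
  shows "is_orth_proj n p l (tangent_space n p l X)
           (\<lambda>U. tsub U (tscale (1/2) (tprod l p X
                  (tadd (tprod l n (ttrans l X) U) (tprod l n (ttrans l U) X)))))
    \<and> (\<forall>U \<in> tensors n p l.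
         tsub U (tscale (1/2) (tprod l p X
                  (tadd (tprod l n (ttrans l X) U) (tprod l n (ttrans l U) X))))
           = tsub U (tprod l p X (tsym l (tprod l n (ttrans l X) U)))
       \<and> tsub U (tprod l p X (tsym l (tprod l n (ttrans l X) U)))
           = tadd (tprod l n (tsub (tid n l) (tprod l p X (ttrans l X))) U)
                  (tprod l p X (tskew l (tprod l n (ttrans l X) U))))"
proof -
  note X = assms(2)
  have Xt: "X \<in> tensors n p l" and XX: "tprod l n (ttrans l X) X = tid p l" using stiefelD[OF X] by auto
  have Gt: "tprod l n (ttrans l U) X = ttrans l (tprod l n (ttrans l X) U)" for U
    by (simp add: ttrans_tprod ttrans_ttrans[OF Xt])
  have GT: "tprod l n (ttrans l X) U \<in> tensors p p l" if "U \<in> tensors n p l" for U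
    by (intro tprod_tensors ttrans_tensors Xt that)
  have part1: "is_orth_proj n p l (tangent_space n p l X)
           (\<lambda>U. tsub U (tscale (1/2) (tprod l p X
                  (tadd (tprod l n (ttrans l X) U) (tprod l n (ttrans l U) X)))))"
    unfolding is_orth_proj_def
  proof (intro ballI conjI)
    fix U assume U: "U \<in> tensors n p l"
    define G where "G = tprod l n (ttrans l X) U"
    have G: "G \<in> tensors p p l" unfolding G_def using GT[OF U] .
    define PU where "PU = tsub U (tscale (1/2) (tprod l p X (tadd G (ttrans l G))))"
    have PUt: "PU \<in> tensors n p l" unfolding PU_def
      by (intro tsub_tensors tscale_tensors tprod_tensors tadd_tensors ttrans_tensors U Xt G)
    have XPU: "tprod l n (ttrans l X) PU = tsub G (tscale (1/2) (tadd G (ttrans l G)))"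
      unfolding PU_def tprod_sub_right tprod_scale_right tprod_assoc[symmetric] XX G_def[symmetric]
        tid_left[OF tadd_tensors[OF G ttrans_tensors[OF G]]] ..
    have sk: "ttrans l (tprod l n (ttrans l X) PU) = tscale (-1) (tprod l n (ttrans l X) PU)"
      unfolding XPU ttrans_sub ttrans_scale ttrans_add ttrans_ttrans[OF G]
      by (simp add: fun_eq_iff tsub_def tscale_def tadd_def field_simps)
    obtain W where W: "W \<in> tensors n n l" "ttrans l W = tscale (-1) W" "tprod l n W X = tscale (1/2) PU"
      using W_construct[OF X PUt sk] by blast
    have "tscale 2 (tprod l n W X) \<in> tangent_space n p l X" using curve[OF X W(1,2)] .
    moreover have "tscale 2 (tprod l n W X) = PU" unfolding W(3) by (simp add: fun_eq_iff tscale_def)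
    ultimately show "tsub U (tscale (1/2) (tprod l p X
                  (tadd (tprod l n (ttrans l X) U) (tprod l n (ttrans l U) X)))) \<in> tangent_space n p l X"
      unfolding PU_def G_def Gt by simp
  next
    fix U V assume U: "U \<in> tensors n p l" and V: "V \<in> tangent_space n p l X"
    define G where "G = tprod l n (ttrans l X) U"
    have G: "G \<in> tensors p p l" unfolding G_def using GT[OF U] .
    define K where "K = tprod l n (ttrans l X) V"
    have KT: "ttrans l K = tscale (-1) K"
    proof -
      have "ttrans l K = tprod l n (ttrans l V) X" unfolding K_def by (simp add: ttrans_tprod ttrans_ttrans[OF Xt])
      moreover have "\<And>i j k. K i j k + tprod l n (ttrans l V) X i j k = 0"
        using tangent_nec[OF X V] unfolding K_def tadd_def by metis
      ultimately show ?thesis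
        by (simp add: fun_eq_iff tscale_def) (metis add_eq_0_iff)
    qed
    have "tsub U (tsub U (tscale (1/2) (tprod l p X (tadd G (ttrans l G))))) =
          tscale (1/2) (tprod l p X (tadd G (ttrans l G)))"
      by (simp add: fun_eq_iff tsub_def)
    hence "tinner n p l (tsub U (tsub U (tscale (1/2) (tprod l p X (tadd G (ttrans l G)))))) V
        = (1/2) * tinner p p l (tadd G (ttrans l G)) K"
      unfolding K_def by (simp add: tinner_scale_left tinner_adj)
    also have "\<dots> = (1/2) * (tinner p p l G K + tinner p p l (ttrans l G) K)"
      by (simp add: tinner_add_left)
    also have "tinner p p l (ttrans l G) K = - tinner p p l G K"
    proof -
      have "tinner p p l (ttrans l G) K = tinner p p l (ttrans l (ttrans l G)) (ttrans l K)"
        by (rule tinner_trans[symmetric])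
      also have "\<dots> = - tinner p p l G K" unfolding ttrans_ttrans[OF G] KT
        by (simp add: tinner_scale_right)
      finally show ?thesis .
    qed
    finally show "tinner n p l (tsub U (tsub U (tscale (1/2) (tprod l p X
                  (tadd (tprod l n (ttrans l X) U) (tprod l n (ttrans l U) X)))))) V = 0"
      unfolding G_def Gt by simp
  qed
  have part2: "tsub U (tscale (1/2) (tprod l p X
                  (tadd (tprod l n (ttrans l X) U) (tprod l n (ttrans l U) X))))
           = tsub U (tprod l p X (tsym l (tprod l n (ttrans l X) U)))
       \<and> tsub U (tprod l p X (tsym l (tprod l n (ttrans l X) U)))
           = tadd (tprod l n (tsub (tid n l) (tprod l p X (ttrans l X))) U)
                  (tprod l p X (tskew l (tprod l n (ttrans l X) U)))" if U: "U \<in> tensors n p l" for U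
  proof
    show "tsub U (tscale (1/2) (tprod l p X
                  (tadd (tprod l n (ttrans l X) U) (tprod l n (ttrans l U) X))))
           = tsub U (tprod l p X (tsym l (tprod l n (ttrans l X) U)))"
      unfolding tsym_def tprod_scale_right Gt ..
    show "tsub U (tprod l p X (tsym l (tprod l n (ttrans l X) U)))
           = tadd (tprod l n (tsub (tid n l) (tprod l p X (ttrans l X))) U)
                  (tprod l p X (tskew l (tprod l n (ttrans l X) U)))"
      unfolding tsym_def tskew_def tprod_sub_left tprod_scale_right tprod_add_right tprod_sub_right
        tid_left[OF U] tprod_assoc
      by (simp add: fun_eq_iff tsub_def tadd_def tscale_def algebra_simps)
  qed
  show ?thesis using part1 part2 by blast
qed


end
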